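(* Let $k\in\mathbb{Z}^+$, let $G:\mathbb{R}\to\mathbb{R}$, and for real weights $\psi_1,\psi_2,\nu,\beta_i,\phi_{i,1},\phi_{i,2},\mu_i$ ($i=1,\dots,k$) let $g(y,e)=\nu+\sum_{i=1}^{k}\beta_iG(\phi_{i,1}y+\phi_{i,2}e+\mu_i)$. Consider the Markov chain $(x_t)$ on $\mathbb{R}^2$ defined by $$x_t=\Psi x_{t-1}+F(x_{t-1})+\Sigma\,\varepsilon_t,$$ where $x_t=(y_t,e_t)'$, $\Sigma=(1,1)'$, $\Psi=\begin{bmatrix}\psi_1&\psi_2\\0&0\end{bmatrix}$, $F(y,e)=(g(y,e),0)'$, and $(\varepsilon_t)$ is an i.i.d. sequence of real random variables. Suppose the distribution of $\varepsilon_t$ is absolutely continuous with respect to Lebesgue measure $\lambda$, with density $\nu(\cdot)$ that is positive everywhere on $\mathbb{R}$ and lower semi-continuous everywhere. Suppose moreover that (a) $G\in C^\infty$ is bounded, nonconstant and asymptotically constant, and (b) $\psi_1+\psi_2\neq 0$. Then the Markov chain $(x_t)$ is irreducible on the state space $(\mathbb{R}^2,\mathcal{B})$, where $\mathcal{B}$ is the Borel $\sigma$-field.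
   Context: This chain is the state-space form of the PARNN$(1,k,1)$ process $y_t=\psi_1y_{t-1}+\psi_2e_{t-1}+g(y_{t-1},e_{t-1})+\varepsilon_t$. A Markov chain on $(\mathcal{X},\mathcal{B})$, $\mathcal{X}\subseteq\mathbb{R}^2$, is called irreducible if $\sum_{t=1}^{\infty}P^t(x,\mathcal{A})>0$ for all $x\in\mathcal{X}$ whenever $\lambda(\mathcal{A})>0$, where $P^t(x,\mathcal{A})$ is the $t$-step transition probability from $x$ to $\mathcal{A}\in\mathcal{B}$ and $\lambda$ is Lebesgue measure. *)

theory Defs
  imports "HOL-Analysis.Analysis"
begin

definition lower_semicontinuous_everywhere :: "(real \<Rightarrow> real) \<Rightarrow> bool" where
  "lower_semicontinuous_everywhere f \<longleftrightarrow>
     (\<forall>x c. c < f x \<longrightarrow> eventually (\<lambda>y. c < f y) (at x))"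

definition C_infinity :: "(real \<Rightarrow> real) \<Rightarrow> bool" where
  "C_infinity f \<longleftrightarrow>
     (\<exists>D :: nat \<Rightarrow> real \<Rightarrow> real. D 0 = f \<and>
        (\<forall>n x. (D n has_real_derivative D (Suc n) x) (at x)))"

definition asymptotically_constant :: "(real \<Rightarrow> real) \<Rightarrow> bool" where
  "asymptotically_constant f \<longleftrightarrow>
     (\<exists>a b. (f \<longlongrightarrow> a) at_top \<and> (f \<longlongrightarrow> b) at_bot)"

definition parnn_g ::
  "nat \<Rightarrow> (real \<Rightarrow> real) \<Rightarrow> real \<Rightarrow> (nat \<Rightarrow> real) \<Rightarrow> (nat \<Rightarrow> real) \<Rightarrow> (nat \<Rightarrow> real)
   \<Rightarrow> (nat \<Rightarrow> real) \<Rightarrow> real \<Rightarrow> real \<Rightarrow> real" where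
  "parnn_g k G \<nu> \<beta> \<phi>1 \<phi>2 \<mu> y e =
     \<nu> + (\<Sum>i=1..k. \<beta> i * G (\<phi>1 i * y + \<phi>2 i * e + \<mu> i))"

text \<open>One step of the state-space recursion x_t = Psi x_{t-1} + F(x_{t-1}) + Sigma eps_t,
  with x = (y,e), Psi = [[psi1,psi2],[0,0]], F(y,e) = (g(y,e),0), Sigma = (1,1).\<close>
definition chain_step ::
  "real \<Rightarrow> real \<Rightarrow> (real \<Rightarrow> real \<Rightarrow> real) \<Rightarrow> real \<times> real \<Rightarrow> real \<Rightarrow> real \<times> real" where
  "chain_step \<psi>1 \<psi>2 g x \<epsilon> =
     (\<psi>1 * fst x + \<psi>2 * snd x + g (fst x) (snd x) + \<epsilon>, \<epsilon>)"

text \<open>t-step transition probability P^t(x,A) of the chain, when the innovations are i.i.d.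
  with Lebesgue density dens (recursion on the first step, Chapman-Kolmogorov).\<close>
fun trans_prob ::
  "(real \<Rightarrow> real) \<Rightarrow> (real \<times> real \<Rightarrow> real \<Rightarrow> real \<times> real) \<Rightarrow> nat
   \<Rightarrow> real \<times> real \<Rightarrow> (real \<times> real) set \<Rightarrow> ennreal" where
  "trans_prob dens step 0 x A = indicator A x"
| "trans_prob dens step (Suc t) x A =
     (\<integral>\<^sup>+ \<epsilon>. ennreal (dens \<epsilon>) * trans_prob dens step t (step x \<epsilon>) A \<partial>lborel)"

definition irreducible_chain ::
  "(nat \<Rightarrow> real \<times> real \<Rightarrow> (real \<times> real) set \<Rightarrow> ennreal) \<Rightarrow> bool" where
  "irreducible_chain P \<longleftrightarrow>
     (\<forall>x A. A \<in> sets (borel :: (real \<times> real) measure) \<and> emeasure lborel A > 0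
        \<longrightarrow> (\<Sum>t. P (Suc t) x A) > 0)"

end

theory Submission
  imports Defs
begin

lemma G_deriv:
  assumes "C_infinity G"
  shows "\<exists>D1. \<forall>x. (G has_real_derivative D1 x) (at x)"
  using assms unfolding C_infinity_def by metis

theorem theorem1:
  fixes k :: nat and G :: "real \<Rightarrow> real"
    and \<psi>1 \<psi>2 \<nu> :: real and \<beta> \<phi>1 \<phi>2 \<mu> :: "nat \<Rightarrow> real"
    and dens :: "real \<Rightarrow> real"
  assumes "k \<ge> 1"
    and dens_meas: "dens \<in> borel_measurable lborel"
    and dens_prob: "(\<integral>\<^sup>+ \<epsilon>. ennreal (dens \<epsilon>) \<partial>lborel) = 1"
    and dens_pos: "\<forall>\<epsilon>. dens \<epsilon> > 0"
    and dens_lsc: "lower_semicontinuous_everywhere dens"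
    and G_smooth: "C_infinity G"
    and G_bounded: "bounded (range G)"
    and G_nonconst: "\<not> (\<exists>c. \<forall>x. G x = c)"
    and G_asym: "asymptotically_constant G"
    and psi: "\<psi>1 + \<psi>2 \<noteq> 0"
  shows "irreducible_chain
           (trans_prob dens (chain_step \<psi>1 \<psi>2 (parnn_g k G \<nu> \<beta> \<phi>1 \<phi>2 \<mu>)))"
proof -
  define g where "g = parnn_g k G \<nu> \<beta> \<phi>1 \<phi>2 \<mu>"
  define step where "step = chain_step \<psi>1 \<psi>2 g"
  obtain D1 where D1: "\<And>x. (G has_real_derivative D1 x) (at x)"
    using G_deriv[OF G_smooth] by blast
  have Gd: "\<And>x. G differentiable (at x)"
    using D1 real_differentiable_def by blast
  have Gc: "continuous_on UNIV G"
    using D1 by (meson DERIV_isCont continuous_at_imp_continuous_on)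
  obtain B where B: "\<And>x. \<bar>G x\<bar> \<le> B"
    using G_bounded by (auto simp: bounded_iff)
  define M where "M = \<bar>\<nu>\<bar> + (\<Sum>i=1..k. \<bar>\<beta> i\<bar> * B)"
  have gB: "\<bar>g y e\<bar> \<le> M" for y e
  proof -
    have "\<bar>g y e\<bar> \<le> \<bar>\<nu>\<bar> + \<bar>\<Sum>i=1..k. \<beta> i * G (\<phi>1 i * y + \<phi>2 i * e + \<mu> i)\<bar>"
      unfolding g_def parnn_g_def by linarith
    also have "\<dots> \<le> \<bar>\<nu>\<bar> + (\<Sum>i=1..k. \<bar>\<beta> i * G (\<phi>1 i * y + \<phi>2 i * e + \<mu> i)\<bar>)"
      using sum_abs by auto
    also have "\<dots> \<le> M" unfolding M_def
      by (intro add_left_mono sum_mono) (auto simp: abs_mult B mult_left_mono)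
    finally show ?thesis .
  qed
  show ?thesis
    unfolding irreducible_chain_def g_def[symmetric] step_def[symmetric]
  proof (intro allI impI, elim conjE)
    fix x :: "real \<times> real" and A :: "(real \<times> real) set"
    assume A: "A \<in> sets borel" and Apos: "emeasure lborel A > 0"
    define h0 where "h0 = \<psi>1 * fst x + \<psi>2 * snd x + g (fst x) (snd x)"
    define u where "u = (\<lambda>s. \<psi>1 * (h0 + s) + \<psi>2 * s + g (h0 + s) s)"
    define \<Phi> where "\<Phi> = (\<lambda>z::real\<times>real. step (step x (fst z)) (snd z))"
    have \<Phi>_eq: "\<Phi> z = (u (fst z) + snd z, snd z)" for z
      unfolding \<Phi>_def step_def chain_step_def u_def h0_def by simp
    have ud: "(u has_real_derivative (\<psi>1 + \<psi>2 + (\<Sum>i=1..k. \<beta> i * (D1 (\<phi>1 i * (h0 + s) + \<phi>2 i * s + \<mu> i) * (\<phi>1 i + \<phi>2 i))))) (at s)" for s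
      unfolding u_def g_def parnn_g_def
      by (auto intro!: derivative_eq_intros DERIV_chain2[OF D1] simp: algebra_simps)
    have ucont: "continuous_on UNIV u"
      using ud by (meson DERIV_isCont continuous_at_imp_continuous_on)
    have ud2: "u differentiable (at s)" for s
      using ud real_differentiable_def by blast
    have \<Phi>_diff: "\<Phi> differentiable_on UNIV"
    proof -
      have "(\<lambda>z. (u (fst z) + snd z, snd z)) differentiable (at z)" for z :: "real \<times> real"
      proof -
        have "(\<lambda>z. u (fst z)) differentiable (at z)"
          using differentiable_chain_at[OF bounded_linear_imp_differentiable[OF bounded_linear_fst] ud2] by (simp add: o_def)
        then show ?thesis
          by (intro differentiable_Pair differentiable_add bounded_linear_imp_differentiable[OF bounded_linear_snd])
      qed
      moreover have "\<Phi> = (\<lambda>z. (u (fst z) + snd z, snd z))"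
        using \<Phi>_eq by (intro ext) simp
      ultimately show ?thesis
        by (simp add: differentiable_at_imp_differentiable_on)
    qed
    have \<Phi>_cont: "continuous_on UNIV \<Phi>"
      using \<Phi>_diff differentiable_imp_continuous_on by blast
    have u_surj: "\<exists>s. u s = a" for a
    proof -
      define c where "c = \<psi>1 + \<psi>2"
      have c0: "c \<noteq> 0" using psi c_def by simp
      have ub: "\<bar>u s - (c * s + \<psi>1 * h0)\<bar> \<le> M" for s
      proof -
        have "u s - (c * s + \<psi>1 * h0) = g (h0 + s) s"
          unfolding u_def c_def by (simp add: algebra_simps)
        then show ?thesis using gB by simp
      qed
      define s1 where "s1 = (a - \<psi>1 * h0 + M + 1) / c"
      define s2 where "s2 = (a - \<psi>1 * h0 - M - 1) / c"
      have "c * s1 = a - \<psi>1 * h0 + M + 1" using c0 s1_def by simp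
      then have u1: "a \<le> u s1" using ub[of s1] by linarith
      have "c * s2 = a - \<psi>1 * h0 - M - 1" using c0 s2_def by simp
      then have u2: "u s2 \<le> a" using ub[of s2] by linarith
      show ?thesis
      proof (cases "s2 \<le> s1")
        case True
        then show ?thesis
          using IVT'[of u s2 a s1] u1 u2 continuous_on_subset[OF ucont] by blast
      next
        case False
        then show ?thesis
          using IVT2'[of u s2 a s1] u1 u2 continuous_on_subset[OF ucont] by auto
      qed
    qed
    have \<Phi>_surj: "A \<subseteq> \<Phi> ` UNIV"
    proof
      fix z assume "z \<in> A"
      obtain s where "u s = fst z - snd z" using u_surj by blast
      then have "\<Phi> (s, snd z) = z" by (simp add: \<Phi>_eq)
      then show "z \<in> \<Phi> ` UNIV" by (metis rangeI)
    qed
    have \<Phi>_meas[measurable]: "\<Phi> \<in> borel_measurable borel"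
      using \<Phi>_cont borel_measurable_continuous_onI by blast
    define N where "N = \<Phi> -` A"
    have N_sets: "N \<in> sets borel"
      unfolding N_def using measurable_sets[OF \<Phi>_meas A] by simp
    have Npos: "emeasure lborel N \<noteq> 0"
    proof
      assume "emeasure lborel N = 0"
      then have "N \<in> null_sets lborel" using N_sets by auto
      then have "N \<in> null_sets lebesgue" by (rule null_sets_completionI)
      then have "negligible N" by (simp add: negligible_iff_null_sets)
      then have "negligible (\<Phi> ` N)"
        by (intro negligible_differentiable_image_negligible)
           (auto intro: differentiable_on_subset[OF \<Phi>_diff])
      moreover have "A \<subseteq> \<Phi> ` N"
        using \<Phi>_surj unfolding N_def by auto
      ultimately have "negligible A" using negligible_subset by blast
      then have "A \<in> null_sets lebesgue" by (simp add: negligible_iff_null_sets)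
      then have "A \<in> null_sets lborel"
        using null_sets_completion_iff[of A lborel] A by simp
      then show False using Apos by auto
    qed
    define f where "f = (\<lambda>z::real\<times>real. ennreal (dens (fst z)) * (ennreal (dens (snd z)) * indicator A (\<Phi> z)))"
    have dm[measurable]: "dens \<in> borel_measurable borel" using dens_meas by simp
    have \<Phi>_meas2[measurable]: "\<Phi> \<in> borel_measurable (lborel \<Otimes>\<^sub>M lborel)"
      using \<Phi>_meas by (simp add: lborel_prod)
    have dm2[measurable]: "dens \<in> borel_measurable lborel" using dens_meas by simp
    have f_meas2: "f \<in> borel_measurable (lborel \<Otimes>\<^sub>M lborel)"
      unfolding f_def using A by measurable
    have f_meas: "f \<in> borel_measurable lborel"
      using f_meas2 by (simp add: lborel_prod)
    have "trans_prob dens step (Suc (Suc 0)) x A =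
        (\<integral>\<^sup>+ e1. \<integral>\<^sup>+ e2. f (e1, e2) \<partial>lborel \<partial>lborel)"
    proof -
      have im: "(\<lambda>e2. ennreal (dens e2) * indicator A (\<Phi> (e1,e2))) \<in> borel_measurable lborel" for e1
        using A by measurable
      have "trans_prob dens step (Suc (Suc 0)) x A = (\<integral>\<^sup>+ e1. ennreal (dens e1) * (\<integral>\<^sup>+ e2. ennreal (dens e2) * indicator A (\<Phi> (e1,e2)) \<partial>lborel) \<partial>lborel)"
        by (simp add: \<Phi>_def)
      also have "\<dots> = (\<integral>\<^sup>+ e1. \<integral>\<^sup>+ e2. f (e1, e2) \<partial>lborel \<partial>lborel)"
        by (intro nn_integral_cong) (simp add: f_def nn_integral_cmult[OF im])
      finally show ?thesis .
    qed
    also have "\<dots> = integral\<^sup>N (lborel \<Otimes>\<^sub>M lborel) f"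
      by (rule lborel.nn_integral_fst) (rule f_meas2)
    also have "\<dots> = integral\<^sup>N lborel f" by (simp add: lborel_prod)
    finally have P2: "trans_prob dens step (Suc (Suc 0)) x A = integral\<^sup>N lborel f" .
    have "integral\<^sup>N lborel f \<noteq> 0"
    proof
      assume "integral\<^sup>N lborel f = 0"
      then have "AE z in lborel. f z = 0"
        using f_meas by (simp add: nn_integral_0_iff_AE)
      then have "AE z in lborel. z \<notin> N"
        by eventually_elim (use dens_pos in \<open>auto simp: f_def N_def indicator_def ennreal_eq_0_iff less_le_not_le\<close>)
      then have "emeasure lborel N = 0"
        using AE_iff_measurable[of N lborel "\<lambda>z. z \<notin> N"] N_sets by auto
      then show False using Npos by simp
    qed
    then have "0 < trans_prob dens step (Suc (Suc 0)) x A"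
      using P2 by (simp add: zero_less_iff_neq_zero)
    also have "\<dots> \<le> (\<Sum>t. trans_prob dens step (Suc t) x A)"
      using sum_le_suminf[OF summableI, of "{Suc 0}" "\<lambda>t. trans_prob dens step (Suc t) x A"] by simp
    finally show "0 < (\<Sum>t. trans_prob dens step (Suc t) x A)" .
  qed
qed

end
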